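(* Let $V$ be a finite-dimensional complex vector space with a Hermitian inner product and norm $\|\cdot\|$, let $\mathbf G$ be a finite group of unitary transformations of $V$, and let $\mathbf x_0\in V$ with $\|\mathbf x_0\|=1$ have full orbit under $\mathbf G$. Fix a subgroup sequence $\{I\}=\mathbf G_0<\mathbf G_1<\cdots<\mathbf G_m=\mathbf G$ and coset leader sets $\operatorname{CL}(\mathbf G_k/\mathbf G_{k-1})$, $1\le k\le m$. Then the subgroup decoding algorithm decodes correctly with some noise if and only if, for every $k$ with $0\le k<m$, every induced coset leader in $\operatorname{CL}(\mathbf G/\mathbf G_k)$ is minimal (as a coset representative of $\mathbf G_k$ in $\mathbf G$).
   Context: $\mathbf x_0$ has full orbit if $|\mathbf G\mathbf x_0|=|\mathbf G|$; $S=\operatorname{Stab}_{\mathbf G}(\mathbf x_0)$, and for a subgroup $H$, $\operatorname{Stab}_H(\mathbf x_0)=H\cap S$. Codewords are the vectors $g^{-1}\mathbf x_0$, $g\in\mathbf G$. A set $\operatorname{CL}(\mathbf G_k/\mathbf G_{k-1})$ of coset leaders is a set of representatives of the left cosets $a\mathbf G_{k-1}$ of $\mathbf G_{k-1}$ in $\mathbf G_k$ containing $I$. For $k<l$ the induced coset leaders are $\operatorname{CL}(\mathbf G_l/\mathbf G_k)=\{c_l c_{l-1}\cdots c_{k+1}: c_i\in\operatorname{CL}(\mathbf G_i/\mathbf G_{i-1})\}$, a complete set of left coset representatives of $\mathbf G_k$ in $\mathbf G_l$. Subgroup decoding algorithm: given $\mathbf r\in V$, set $\mathbf r_0=\mathbf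 r$; for $k=1,\dots,m$ choose $d_k\in\operatorname{CL}(\mathbf G_k/\mathbf G_{k-1})$ minimizing $\|a\mathbf r_{k-1}-\mathbf x_0\|$ over $a\in\operatorname{CL}(\mathbf G_k/\mathbf G_{k-1})$ (ties broken by a fixed ordering) and set $\mathbf r_k=d_k\mathbf r_{k-1}$; output $g'=d_m\cdots d_1$. It decodes correctly with some noise if there is $\delta>0$ such that for all $g\in\mathbf G$ and $\mathbf r\in V$ with $\|\mathbf r-g^{-1}\mathbf x_0\|<\delta$ the output lies in $Sg$. Fundamental region of a subgroup $H$: $\operatorname{FR}(H)=\{\mathbf x\in V:\|\mathbf x-\mathbf x_0\|<\|h\mathbf x-\mathbf x_0\|\text{ for all }h\in H\setminus\operatorname{Stab}_H(\mathbf x_0)\}$. For subgroups $H\le K$, a coset representative $c$ of $H$ in $K$ is minimal if $\mathbf x_0\in c(\operatorname{FR}(H))$. *)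

theory Defs
  imports "HOL-Analysis.Analysis"
begin

text \<open>The space V is modelled as complex^'n with its standard Hermitian norm
  (the euclidean norm of the vector type). Group elements are maps V => V.\<close>

type_synonym 'n vmap = "complex^'n \<Rightarrow> complex^'n"

definition clinear_map :: "'n::finite vmap \<Rightarrow> bool" where
  "clinear_map f \<longleftrightarrow> (\<forall>x y. f (x + y) = f x + f y) \<and> (\<forall>c x. f (c *s x) = c *s f x)"

definition unitary_map :: "'n::finite vmap \<Rightarrow> bool" where
  "unitary_map f \<longleftrightarrow> clinear_map f \<and> bij f \<and> (\<forall>x. norm (f x) = norm x)"

definition subgroup_of :: "'n::finite vmap set \<Rightarrow> 'n vmap set \<Rightarrow> bool" where
  "subgroup_of H K \<longleftrightarrow> H \<subseteq> K \<and> id \<in> H \<and> (\<forall>a\<in>H. \<forall>b\<in>H. a \<circ> b \<in> H)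
     \<and> (\<forall>a\<in>H. inv a \<in> H)"

definition finite_unitary_group :: "'n::finite vmap set \<Rightarrow> bool" where
  "finite_unitary_group G \<longleftrightarrow> finite G \<and> (\<forall>g\<in>G. unitary_map g) \<and> subgroup_of G G"

definition full_orbit :: "'n::finite vmap set \<Rightarrow> complex^'n \<Rightarrow> bool" where
  "full_orbit G x0 \<longleftrightarrow> card ((\<lambda>g. g x0) ` G) = card G"

definition stab :: "'n::finite vmap set \<Rightarrow> complex^'n \<Rightarrow> 'n vmap set" where
  "stab H x0 = {h\<in>H. h x0 = x0}"

definition left_coset :: "'n::finite vmap \<Rightarrow> 'n vmap set \<Rightarrow> 'n vmap set" where
  "left_coset a H = (\<lambda>h. a \<circ> h) ` H"

text \<open>cl k : a list enumerating CL(G_k/G_{k-1}) without repetitions; the list order is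
  the fixed ordering used to break ties.\<close>
definition coset_leaders :: "'n::finite vmap list \<Rightarrow> 'n vmap set \<Rightarrow> 'n vmap set \<Rightarrow> bool" where
  "coset_leaders L H K \<longleftrightarrow> distinct L \<and> set L \<subseteq> K \<and> id \<in> set L
     \<and> (\<forall>a\<in>K. \<exists>!c. c \<in> set L \<and> c \<in> left_coset a H)"

definition subgroup_chain :: "(nat \<Rightarrow> 'n::finite vmap set) \<Rightarrow> nat \<Rightarrow> 'n vmap set \<Rightarrow> bool" where
  "subgroup_chain Gs m G \<longleftrightarrow> Gs 0 = {id} \<and> Gs m = G
     \<and> (\<forall>k. 1 \<le> k \<and> k \<le> m \<longrightarrow> subgroup_of (Gs (k - 1)) (Gs k) \<and> Gs (k - 1) \<subset> Gs k)
     \<and> (\<forall>k\<le>m. subgroup_of (Gs k) G)"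

fun first_min :: "('a \<Rightarrow> real) \<Rightarrow> 'a list \<Rightarrow> 'a" where
  "first_min f [] = undefined"
| "first_min f [a] = a"
| "first_min f (a # b # xs) = (let c = first_min f (b # xs) in if f a \<le> f c then a else c)"

text \<open>State after k decoding steps: (r_k, d_k o ... o d_1).\<close>
fun dec_state :: "complex^'n \<Rightarrow> (nat \<Rightarrow> 'n::finite vmap list) \<Rightarrow> complex^'n \<Rightarrow> nat
                   \<Rightarrow> (complex^'n) \<times> 'n vmap" where
  "dec_state x0 cl r 0 = (r, id)"
| "dec_state x0 cl r (Suc k) =
     (let (rk, g) = dec_state x0 cl r k;
          d = first_min (\<lambda>a. norm (a rk - x0)) (cl (Suc k))
      in (d rk, d \<circ> g))"

definition subgroup_decode ::
  "complex^'n \<Rightarrow> (nat \<Rightarrow> 'n::finite vmap list) \<Rightarrow> nat \<Rightarrow> complex^'n \<Rightarrow> 'n vmap" where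
  "subgroup_decode x0 cl m r = snd (dec_state x0 cl r m)"

definition decodes_correctly_with_noise ::
  "'n::finite vmap set \<Rightarrow> complex^'n \<Rightarrow> (nat \<Rightarrow> 'n vmap list) \<Rightarrow> nat \<Rightarrow> bool" where
  "decodes_correctly_with_noise G x0 cl m \<longleftrightarrow>
     (\<exists>\<delta>>0. \<forall>g\<in>G. \<forall>r. norm (r - inv g x0) < \<delta> \<longrightarrow>
        subgroup_decode x0 cl m r \<in> (\<lambda>s. s \<circ> g) ` stab G x0)"

definition fundamental_region :: "'n::finite vmap set \<Rightarrow> complex^'n \<Rightarrow> (complex^'n) set" where
  "fundamental_region H x0 =
     {x. \<forall>h\<in>H - stab H x0. norm (x - x0) < norm (h x - x0)}"

text \<open>Induced coset leaders CL(G_{k+j}/G_k) = {c_{k+j} o ... o c_{k+1}}.\<close>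
fun induced_cl :: "(nat \<Rightarrow> 'n::finite vmap list) \<Rightarrow> nat \<Rightarrow> nat \<Rightarrow> 'n vmap set" where
  "induced_cl cl k 0 = {id}"
| "induced_cl cl k (Suc j) = {c \<circ> d | c d. c \<in> set (cl (k + Suc j)) \<and> d \<in> induced_cl cl k j}"

definition minimal_rep :: "complex^'n \<Rightarrow> 'n::finite vmap set \<Rightarrow> 'n vmap \<Rightarrow> bool" where
  "minimal_rep x0 H c \<longleftrightarrow> x0 \<in> c ` fundamental_region H x0"

end

theory Submission
  imports Defs
begin

lemma fm_in: "xs \<noteq> [] \<Longrightarrow> first_min f xs \<in> set xs"
  by (induction f xs rule: first_min.induct) (auto simp: Let_def)


lemma fm_le: "a \<in> set xs \<Longrightarrow> f (first_min f xs) \<le> f a"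
proof (induction f xs rule: first_min.induct)
  case (3 f a' b xs)
  let ?c = "first_min f (b # xs)"
  show ?case
  proof (cases "a = a'")
    case True thus ?thesis by (simp add: Let_def)
  next
    case False
    hence "f ?c \<le> f a" using 3 by simp
    thus ?thesis by (simp add: Let_def)
  qed
qed auto

lemma fm_strict:
  assumes "c \<in> set xs" "\<forall>a\<in>set xs. a \<noteq> c \<longrightarrow> f c < f a"
  shows "first_min f xs = c"
proof (rule ccontr)
  assume ne: "first_min f xs \<noteq> c"
  have "first_min f xs \<in> set xs" using assms(1) by (intro fm_in) auto
  hence "f c < f (first_min f xs)" using assms(2) ne by simp
  moreover have "f (first_min f xs) \<le> f c" by (rule fm_le[OF assms(1)])
  ultimately show False by simp
qed



lemma dec_Suc: "dec_state x0 cl r (Suc k) =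
   (let d = first_min (\<lambda>a. norm (a (fst (dec_state x0 cl r k)) - x0)) (cl (Suc k))
    in (d (fst (dec_state x0 cl r k)), d \<circ> snd (dec_state x0 cl r k)))"
  by (simp add: split_beta Let_def)

lemma dec_fst: "fst (dec_state x0 cl r k) = snd (dec_state x0 cl r k) r"
  by (induction k) (simp_all add: dec_Suc Let_def del: dec_state.simps(2))

lemma dec_snd_Suc: "snd (dec_state x0 cl r (Suc k)) =
   first_min (\<lambda>a. norm (a (snd (dec_state x0 cl r k) r) - x0)) (cl (Suc k)) \<circ> snd (dec_state x0 cl r k)"
  by (simp add: dec_Suc Let_def dec_fst del: dec_state.simps(2))


lemma peel: "induced_cl cl k (Suc j) = {d \<circ> c | d c. d \<in> induced_cl cl (Suc k) j \<and> c \<in> set (cl (Suc k))}"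
proof (induction j)
  case 0
  then show ?case by auto
next
  case (Suc j)
  have "induced_cl cl k (Suc (Suc j)) = {c' \<circ> x | c' x. c' \<in> set (cl (k + Suc (Suc j))) \<and> x \<in> induced_cl cl k (Suc j)}"
    by simp
  also have "\<dots> = {c' \<circ> (d \<circ> c) | c' d c. c' \<in> set (cl (k + Suc (Suc j))) \<and> d \<in> induced_cl cl (Suc k) j \<and> c \<in> set (cl (Suc k))}"
    unfolding Suc by blast
  also have "\<dots> = {d \<circ> c | d c. d \<in> induced_cl cl (Suc k) (Suc j) \<and> c \<in> set (cl (Suc k))}"
  proof (intro equalityI subsetI)
    fix x assume "x \<in> {c' \<circ> (d \<circ> c) | c' d c. c' \<in> set (cl (k + Suc (Suc j))) \<and> d \<in> induced_cl cl (Suc k) j \<and> c \<in> set (cl (Suc k))}"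
    then obtain c' d c where "x = c' \<circ> (d \<circ> c)" "c' \<in> set (cl (k + Suc (Suc j)))" "d \<in> induced_cl cl (Suc k) j" "c \<in> set (cl (Suc k))" by blast
    moreover have "c' \<circ> d \<in> induced_cl cl (Suc k) (Suc j)" using calculation by auto
    ultimately show "x \<in> {d \<circ> c | d c. d \<in> induced_cl cl (Suc k) (Suc j) \<and> c \<in> set (cl (Suc k))}"
      by (metis (mono_tags, lifting) mem_Collect_eq o_assoc)
  next
    fix x assume "x \<in> {d \<circ> c | d c. d \<in> induced_cl cl (Suc k) (Suc j) \<and> c \<in> set (cl (Suc k))}"
    then obtain d c where "x = d \<circ> c" "d \<in> induced_cl cl (Suc k) (Suc j)" "c \<in> set (cl (Suc k))" by blast
    then obtain c' d' where "d = c' \<circ> d'" "c' \<in> set (cl (Suc k + Suc j))" "d' \<in> induced_cl cl (Suc k) j" by auto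
    then show "x \<in> {c' \<circ> (d \<circ> c) | c' d c. c' \<in> set (cl (k + Suc (Suc j))) \<and> d \<in> induced_cl cl (Suc k) j \<and> c \<in> set (cl (Suc k))}"
      using \<open>x = d \<circ> c\<close> \<open>c \<in> set (cl (Suc k))\<close> by (auto simp: o_assoc)
  qed
  finally show ?case .
qed


lemma geom:
  fixes z a b :: "'a::real_inner"
  assumes "norm (z - b) = norm (z - a)" "a \<noteq> b" "t > 0"
  shows "norm (z + t *\<^sub>R (a - b) - a) < norm (z + t *\<^sub>R (a - b) - b)"
proof -
  define p where "p = z - b"
  define e where "e = a - b"
  have za: "z - a = p - e" by (simp add: p_def e_def)
  have h1: "inner p p = inner (p - e) (p - e)" using assms(1) za p_def
    by (metis power2_norm_eq_inner)
  hence h2: "2 * inner p e = inner e e" by (simp add: inner_diff inner_commute)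
  have ep: "inner e e > 0" using assms(2) e_def by simp
  have r1: "z + t *\<^sub>R (a - b) - a = p - (1 - t) *\<^sub>R e" by (simp add: p_def e_def algebra_simps)
  have r2: "z + t *\<^sub>R (a - b) - b = p + t *\<^sub>R e" by (simp add: p_def e_def algebra_simps)
  have q1: "inner (p + t *\<^sub>R e) (p + t *\<^sub>R e) = inner p p + 2*t*inner p e + t*t*inner e e"
    by (simp add: inner_add inner_commute algebra_simps)
  have q2: "inner (p - (1 - t) *\<^sub>R e) (p - (1 - t) *\<^sub>R e) = inner p p - 2*(1-t)*inner p e + (1-t)*(1-t)*inner e e"
    by (simp add: inner_diff inner_commute algebra_simps)
  have "inner (p + t *\<^sub>R e) (p + t *\<^sub>R e) - inner (p - (1 - t) *\<^sub>R e) (p - (1 - t) *\<^sub>R e) = 2 * t * inner e e"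
    unfolding q1 q2 using h2 by (simp add: algebra_simps)
  hence "(norm (p - (1 - t) *\<^sub>R e))^2 < (norm (p + t *\<^sub>R e))^2"
    unfolding power2_norm_eq_inner using ep assms(3) by (smt (verit) mult_pos_pos)
  hence "norm (p - (1 - t) *\<^sub>R e) < norm (p + t *\<^sub>R e)"
    by (smt (verit) norm_ge_zero power_mono)
  thus ?thesis using r1 r2 by simp
qed



locale dsetup =
  fixes G :: "'n::finite vmap set" and x0 :: "complex^'n" and Gs :: "nat \<Rightarrow> 'n vmap set"
    and m :: nat and cl :: "nat \<Rightarrow> 'n vmap list"
  assumes finG: "finite G"
    and unit: "\<And>g. g \<in> G \<Longrightarrow> unitary_map g"
    and subG: "subgroup_of G G"
    and injx: "inj_on (\<lambda>g. g x0) G"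
    and chain: "subgroup_chain Gs m G"
    and cls: "\<And>k. 1 \<le> k \<Longrightarrow> k \<le> m \<Longrightarrow> coset_leaders (cl k) (Gs (k - 1)) (Gs k)"
begin

lemma bijG: "g \<in> G \<Longrightarrow> bij g" using unit unfolding unitary_map_def by blast
lemma addG: "g \<in> G \<Longrightarrow> g (x + y) = g x + g y" using unit unfolding unitary_map_def clinear_map_def by blast
lemma normG: "g \<in> G \<Longrightarrow> norm (g x) = norm x" using unit unfolding unitary_map_def by blast
lemma idG: "id \<in> G" using subG unfolding subgroup_of_def by blast
lemma compG: "a \<in> G \<Longrightarrow> b \<in> G \<Longrightarrow> a \<circ> b \<in> G" using subG unfolding subgroup_of_def by blast
lemma invG: "a \<in> G \<Longrightarrow> inv a \<in> G" using subG unfolding subgroup_of_def by blast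

lemma distG: assumes "g \<in> G" shows "norm (g x - g y) = norm (x - y)"
proof -
  have "g x = g (x - y) + g y" using addG[OF assms, of "x - y" y] by simp
  hence "g x - g y = g (x - y)" by (simp add: algebra_simps)
  thus ?thesis using normG[OF assms] by simp
qed

lemma invl: "g \<in> G \<Longrightarrow> inv g (g x) = x" using bijG bij_is_inj inv_f_f by metis
lemma invr: "g \<in> G \<Longrightarrow> g (inv g x) = x" using bijG bij_is_surj surj_f_inv_f by metis
lemma invo1: "g \<in> G \<Longrightarrow> inv g \<circ> g = id" by (rule ext) (simp add: invl)
lemma invo2: "g \<in> G \<Longrightarrow> g \<circ> inv g = id" by (rule ext) (simp add: invr)

lemma fix_id: "g \<in> G \<Longrightarrow> g x0 = x0 \<Longrightarrow> g = id"
  using injx idG unfolding inj_on_def by (metis id_apply)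

lemma stabG: "H \<subseteq> G \<Longrightarrow> id \<in> H \<Longrightarrow> stab H x0 = {id}"
  unfolding stab_def using fix_id by auto

lemma Gs_sub: "k \<le> m \<Longrightarrow> subgroup_of (Gs k) G" using chain unfolding subgroup_chain_def by blast
lemma GsG: "k \<le> m \<Longrightarrow> Gs k \<subseteq> G" using Gs_sub unfolding subgroup_of_def by blast
lemma idGs: "k \<le> m \<Longrightarrow> id \<in> Gs k" using Gs_sub unfolding subgroup_of_def by blast
lemma compGs: "k \<le> m \<Longrightarrow> a \<in> Gs k \<Longrightarrow> b \<in> Gs k \<Longrightarrow> a \<circ> b \<in> Gs k" using Gs_sub unfolding subgroup_of_def by blast
lemma invGs: "k \<le> m \<Longrightarrow> a \<in> Gs k \<Longrightarrow> inv a \<in> Gs k" using Gs_sub unfolding subgroup_of_def by blast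
lemma G0: "Gs 0 = {id}" using chain unfolding subgroup_chain_def by blast
lemma Gm: "Gs m = G" using chain unfolding subgroup_chain_def by blast
lemma Gs_mono: "Suc k \<le> m \<Longrightarrow> Gs k \<subseteq> Gs (Suc k)"
  using chain unfolding subgroup_chain_def by (metis diff_Suc_1 le_add1 plus_1_eq_Suc psubset_imp_subset)
lemma Gs_mono_le: "i \<le> l \<Longrightarrow> l \<le> m \<Longrightarrow> Gs i \<subseteq> Gs l"
proof (induction l rule: dec_induct)
  case base then show ?case by simp
next
  case (step l) then show ?case using Gs_mono[of l] by auto
qed

lemma cl_sub: "Suc k \<le> m \<Longrightarrow> set (cl (Suc k)) \<subseteq> Gs (Suc k)"
  using cls[of "Suc k"] unfolding coset_leaders_def by auto
lemma cl_id: "Suc k \<le> m \<Longrightarrow> id \<in> set (cl (Suc k))"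
  using cls[of "Suc k"] unfolding coset_leaders_def by auto
lemma cl_uniq: "Suc k \<le> m \<Longrightarrow> a \<in> Gs (Suc k) \<Longrightarrow> \<exists>!c. c \<in> set (cl (Suc k)) \<and> c \<in> left_coset a (Gs k)"
  using cls[of "Suc k"] unfolding coset_leaders_def by auto

lemma GsG': "k \<le> m \<Longrightarrow> a \<in> Gs k \<Longrightarrow> a \<in> G" using GsG by blast
lemma clG: "Suc k \<le> m \<Longrightarrow> c \<in> set (cl (Suc k)) \<Longrightarrow> c \<in> Gs (Suc k)" using cl_sub by blast

end


context dsetup begin

lemma induced_sub: "k + j \<le> m \<Longrightarrow> induced_cl cl k j \<subseteq> Gs (k + j)"
proof (induction j)
  case 0 then show ?case using idGs by simp
next
  case (Suc j)
  show ?case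
  proof
    fix x assume "x \<in> induced_cl cl k (Suc j)"
    then obtain c d where x: "x = c \<circ> d" "c \<in> set (cl (Suc (k + j)))" "d \<in> induced_cl cl k j" by auto
    have "d \<in> Gs (k + j)" using Suc x by auto
    hence "d \<in> Gs (Suc (k + j))" using Gs_mono[of "k+j"] Suc.prems by auto
    moreover have "c \<in> Gs (Suc (k + j))" using clG x Suc.prems by simp
    ultimately show "x \<in> Gs (k + Suc j)" using compGs Suc.prems x by simp
  qed
qed

lemma decomp_ex: "k + j \<le> m \<Longrightarrow> g \<in> Gs (k + j) \<Longrightarrow> \<exists>u\<in>induced_cl cl k j. \<exists>h\<in>Gs k. g = u \<circ> h"
proof (induction j arbitrary: g)
  case 0 then show ?case by auto
next
  case (Suc j)
  have le: "Suc (k + j) \<le> m" using Suc.prems by simp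
  have "\<exists>!c. c \<in> set (cl (Suc (k + j))) \<and> c \<in> left_coset g (Gs (k + j))"
    using cl_uniq[OF le] Suc.prems(2) by simp
  then obtain c where c: "c \<in> set (cl (Suc (k + j)))" "c \<in> left_coset g (Gs (k + j))" by blast
  then obtain w where w: "w \<in> Gs (k + j)" "c = g \<circ> w" unfolding left_coset_def by auto
  have wG: "w \<in> G" using GsG'[of "k+j" w] w le by simp
  have gG: "g \<in> G" using GsG' Suc.prems by simp
  have "c \<circ> inv w = g \<circ> (w \<circ> inv w)" using w by (simp add: o_assoc)
  hence g: "g = c \<circ> inv w" using invo2[OF wG] by simp
  have "inv w \<in> Gs (k + j)" using invGs w le by simp
  then obtain u h where uh: "u \<in> induced_cl cl k j" "h \<in> Gs k" "inv w = u \<circ> h" using Suc.IH le by force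
  have "c \<circ> u \<in> induced_cl cl k (Suc j)" using c uh by auto
  moreover have "g = (c \<circ> u) \<circ> h" using g uh by (simp add: o_assoc)
  ultimately show ?case using uh by blast
qed

lemma decomp_uniq: "k + j \<le> m \<Longrightarrow> u \<in> induced_cl cl k j \<Longrightarrow> u' \<in> induced_cl cl k j \<Longrightarrow>
   h \<in> Gs k \<Longrightarrow> h' \<in> Gs k \<Longrightarrow> u \<circ> h = u' \<circ> h' \<Longrightarrow> u = u' \<and> h = h'"
proof (induction j arbitrary: u u' h h')
  case 0 then show ?case by simp
next
  case (Suc j)
  have le: "Suc (k + j) \<le> m" using Suc.prems by simp
  obtain c d where cd: "u = c \<circ> d" "c \<in> set (cl (Suc (k + j)))" "d \<in> induced_cl cl k j" using Suc.prems by auto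
  obtain c' d' where cd': "u' = c' \<circ> d'" "c' \<in> set (cl (Suc (k + j)))" "d' \<in> induced_cl cl k j" using Suc.prems by auto
  have hk: "h \<in> Gs (k + j)" "h' \<in> Gs (k + j)" using Gs_mono_le[of k "k+j"] le Suc.prems by auto
  have dk: "d \<in> Gs (k + j)" "d' \<in> Gs (k + j)" using induced_sub[of k j] cd cd' le by auto
  define X where "X = d \<circ> h"
  define X' where "X' = d' \<circ> h'"
  have XG: "X \<in> Gs (k + j)" "X' \<in> Gs (k + j)" unfolding X_def X'_def using compGs hk dk le by auto
  have X'G: "X' \<in> G" using GsG'[of "k+j" X'] XG le by simp
  have cG: "c \<in> G" "c' \<in> G" using clG cd cd' le GsG' by blast+
  have eq: "c \<circ> X = c' \<circ> X'" using Suc.prems(6) cd(1) cd'(1) unfolding X_def X'_def by (simp only: o_assoc)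
  have "c' = c' \<circ> (X' \<circ> inv X')" using invo2[OF X'G] by simp
  also have "\<dots> = c \<circ> (X \<circ> inv X')" using eq by (metis o_assoc)
  finally have c'c: "c' = c \<circ> (X \<circ> inv X')" .
  have "X \<circ> inv X' \<in> Gs (k + j)" using XG invGs compGs le by simp
  hence "c' \<in> left_coset c (Gs (k + j))" using c'c unfolding left_coset_def by blast
  moreover have "c \<in> left_coset c (Gs (k + j))" unfolding left_coset_def using idGs le
    by (metis comp_id image_eqI Suc_leD)
  moreover have "c \<in> Gs (Suc (k + j))" using clG cd le by simp
  ultimately have cc: "c = c'" using cl_uniq[OF le, of c] cd cd' by blast
  have "X = inv c \<circ> c \<circ> X" using invo1[OF cG(1)] by simp
  also have "\<dots> = inv c \<circ> c \<circ> X'" by (metis cc eq o_assoc)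
  also have "\<dots> = X'" using invo1[OF cG(1)] by simp
  finally have "d \<circ> h = d' \<circ> h'" unfolding X_def X'_def .
  hence "d = d' \<and> h = h'" using Suc.IH[of d d' h h'] le cd cd' Suc.prems by simp
  thus ?case using cd cd' cc by simp
qed

end


declare dec_state.simps(2)[simp del]

context dsetup begin

definition U :: "nat \<Rightarrow> 'n vmap set" where "U k = induced_cl cl k (m - k)"

lemma U_peel: "Suc k \<le> m \<Longrightarrow> U k = {d \<circ> c | d c. d \<in> U (Suc k) \<and> c \<in> set (cl (Suc k))}"
proof -
  assume "Suc k \<le> m"
  hence "m - k = Suc (m - Suc k)" by simp
  hence "induced_cl cl k (m - k) = induced_cl cl k (Suc (m - Suc k))" by (simp only:)
  thus ?thesis unfolding U_def using peel by (simp only:)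
qed

lemma U_m: "U m = {id}" unfolding U_def by simp

lemma U_sub: "k \<le> m \<Longrightarrow> U k \<subseteq> Gs m"
  unfolding U_def using induced_sub[of k "m - k"] by simp

lemma U_G: "k \<le> m \<Longrightarrow> u \<in> U k \<Longrightarrow> u \<in> G" using U_sub Gm by blast

lemma U0: "g \<in> G \<Longrightarrow> g \<in> U 0"
proof -
  assume "g \<in> G"
  then obtain u h where "u \<in> induced_cl cl 0 m" "h \<in> Gs 0" "g = u \<circ> h"
    using decomp_ex[of 0 m g] Gm by auto
  moreover have "h = id" using calculation G0 by simp
  ultimately show ?thesis unfolding U_def by simp
qed

lemma decomp_uniq_U: "k \<le> m \<Longrightarrow> u \<in> U k \<Longrightarrow> u' \<in> U k \<Longrightarrow>
   h \<in> Gs k \<Longrightarrow> h' \<in> Gs k \<Longrightarrow> u \<circ> h = u' \<circ> h' \<Longrightarrow> u = u' \<and> h = h'"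
  unfolding U_def using decomp_uniq[of k "m - k"] by simp

abbreviation D where "D r k \<equiv> snd (dec_state x0 cl r k)"

lemma fm_cl: "Suc k \<le> m \<Longrightarrow> first_min f (cl (Suc k)) \<in> set (cl (Suc k))"
  using fm_in cl_id by (metis empty_iff list.set(1))

lemma D_in: "k \<le> m \<Longrightarrow> D r k \<in> Gs k"
proof (induction k)
  case 0 then show ?case using G0 by (simp add: id_def)
next
  case (Suc k)
  have "first_min (\<lambda>a. norm (a (D r k r) - x0)) (cl (Suc k)) \<in> Gs (Suc k)"
    using fm_cl[OF Suc.prems] clG[OF Suc.prems] by blast
  moreover have "D r k \<in> Gs (Suc k)" using Suc Gs_mono by auto
  ultimately have "first_min (\<lambda>a. norm (a (D r k r) - x0)) (cl (Suc k)) \<circ> D r k \<in> Gs (Suc k)"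
    using compGs[OF Suc.prems] by blast
  thus ?case by (simp only: dec_snd_Suc)
qed

lemma D_split: "k + j \<le> m \<Longrightarrow> \<exists>q\<in>induced_cl cl k j. D r (k + j) = q \<circ> D r k"
proof (induction j)
  case 0 then show ?case by simp
next
  case (Suc j)
  have "k + j \<le> m" using Suc.prems by simp
  then obtain q where q: "q \<in> induced_cl cl k j" "D r (k + j) = q \<circ> D r k" using Suc.IH by blast
  let ?f = "first_min (\<lambda>a. norm (a (D r (k+j) r) - x0)) (cl (Suc (k + j)))"
  have "?f \<in> set (cl (Suc (k + j)))" using fm_cl Suc.prems by simp
  hence "?f \<circ> q \<in> induced_cl cl k (Suc j)" using q by auto
  moreover have "D r (k + Suc j) = (?f \<circ> q) \<circ> D r k" by (simp only: dec_snd_Suc q(2) o_assoc add_Suc_right)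
  ultimately show ?case by blast
qed

lemma D_split_U: "k \<le> m \<Longrightarrow> \<exists>q\<in>U k. D r m = q \<circ> D r k"
  unfolding U_def using D_split[of k "m - k" r] by simp

definition P :: "nat \<Rightarrow> 'n vmap \<Rightarrow> bool" where
  "P k u \<longleftrightarrow> (\<forall>h\<in>Gs k. h \<noteq> id \<longrightarrow> norm (inv u x0 - x0) < norm (h (inv u x0) - x0))"

lemma minimal_iff: assumes "k \<le> m" "c \<in> G" shows "minimal_rep x0 (Gs k) c \<longleftrightarrow> P k c"
proof -
  have st: "stab (Gs k) x0 = {id}" using stabG GsG idGs assms(1) by blast
  have "minimal_rep x0 (Gs k) c \<longleftrightarrow> inv c x0 \<in> fundamental_region (Gs k) x0"
    unfolding minimal_rep_def
  proof
    assume "x0 \<in> c ` fundamental_region (Gs k) x0"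
    then obtain x where "x \<in> fundamental_region (Gs k) x0" "x0 = c x" by auto
    thus "inv c x0 \<in> fundamental_region (Gs k) x0" using invl[OF assms(2)] by simp
  next
    assume "inv c x0 \<in> fundamental_region (Gs k) x0"
    thus "x0 \<in> c ` fundamental_region (Gs k) x0" using invr[OF assms(2)] by (metis image_eqI)
  qed
  also have "\<dots> \<longleftrightarrow> P k c" unfolding fundamental_region_def P_def st by auto
  finally show ?thesis .
qed

lemma P_m: "u \<in> U m \<Longrightarrow> P m u"
  unfolding P_def U_m using Gm fix_id by fastforce

end


context dsetup begin

lemma inv_comp: "d \<in> G \<Longrightarrow> c \<in> G \<Longrightarrow> inv (d \<circ> c) = inv c \<circ> inv d"
  using o_inv_distrib bijG by blast

lemma suff:
  assumes Pall: "\<And>k u. k \<le> m \<Longrightarrow> u \<in> U k \<Longrightarrow> P k u"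
  shows "decodes_correctly_with_noise G x0 cl m"
proof -
  define M where "M = (\<lambda>p. norm (p - x0)) ` ((\<lambda>g. g x0) ` G)"
  define Df where "Df = {t - s | s t. s \<in> M \<and> t \<in> M \<and> s < t}"
  define \<delta> where "\<delta> = (if Df = {} then 1 else Min Df / 2)"
  have finM: "finite M" unfolding M_def using finG by simp
  have "Df \<subseteq> (\<lambda>(s, t). t - s) ` (M \<times> M)" unfolding Df_def by auto
  hence finD: "finite Df" using finM finite_subset by blast
  have Dpos: "\<And>x. x \<in> Df \<Longrightarrow> x > 0" unfolding Df_def by auto
  have dpos: "\<delta> > 0"
  proof (cases "Df = {}")
    case False
    hence "Min Df \<in> Df" using finD by simp
    hence "Min Df > 0" using Dpos by blast
    thus ?thesis using False unfolding \<delta>_def by simp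
  qed (simp add: \<delta>_def)
  have gap: "\<And>s t. s \<in> M \<Longrightarrow> t \<in> M \<Longrightarrow> s < t \<Longrightarrow> 2 * \<delta> \<le> t - s"
  proof -
    fix s t assume st: "s \<in> M" "t \<in> M" "s < t"
    hence tin: "t - s \<in> Df" unfolding Df_def by blast
    hence "Df \<noteq> {}" by blast
    hence "\<delta> = Min Df / 2" unfolding \<delta>_def by simp
    moreover have "Min Df \<le> t - s" using tin finD by simp
    ultimately show "2 * \<delta> \<le> t - s" by simp
  qed
  have inM: "\<And>a. a \<in> G \<Longrightarrow> norm (a x0 - x0) \<in> M" unfolding M_def by blast
  show ?thesis unfolding decodes_correctly_with_noise_def
  proof (intro exI[of _ \<delta>] conjI dpos ballI allI impI)
    fix g r assume gG: "g \<in> G" and rclose: "norm (r - inv g x0) < \<delta>"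
    have inv: "\<forall>k\<le>m. \<exists>u\<in>U k. g = u \<circ> D r k \<and> norm (D r k r - inv u x0) < \<delta>"
    proof (intro allI)
      fix k show "k \<le> m \<longrightarrow> (\<exists>u\<in>U k. g = u \<circ> D r k \<and> norm (D r k r - inv u x0) < \<delta>)"
      proof (induction k)
        case 0
        show ?case using U0[OF gG] rclose by (intro impI bexI[of _ g]) (auto simp: id_def)
      next
        case (Suc k)
        show ?case
        proof
          assume le: "Suc k \<le> m"
          then obtain u where u: "u \<in> U k" "g = u \<circ> D r k" "norm (D r k r - inv u x0) < \<delta>"
            using Suc.IH Suc_leD by blast
          then obtain d c where dc: "u = d \<circ> c" "d \<in> U (Suc k)" "c \<in> set (cl (Suc k))"
            using U_peel[OF le] by auto
          have dG: "d \<in> G" using U_G dc le by blast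
          have cGs: "c \<in> Gs (Suc k)" using clG dc le by blast
          have cG: "c \<in> G" using GsG' cGs le by blast
          have uG: "u \<in> G" using dc dG cG compG by simp
          define rk where "rk = D r k r"
          define y where "y = inv d x0"
          define z where "z = inv u x0"
          have zy: "z = inv c y" unfolding z_def y_def dc(1) inv_comp[OF dG cG] by simp
          have cz: "c z = y" using zy invr[OF cG] by simp
          have rkz: "norm (rk - z) < \<delta>" using u(3) unfolding rk_def z_def .
          define f where "f = (\<lambda>a. norm (a rk - x0))"
          have approx: "\<And>a. a \<in> G \<Longrightarrow> \<bar>f a - norm (a z - x0)\<bar> < \<delta>"
          proof -
            fix a assume aG: "a \<in> G"
            have "\<bar>f a - norm (a z - x0)\<bar> \<le> norm ((a rk - x0) - (a z - x0))"
              unfolding f_def by (rule norm_triangle_ineq3)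
            also have "\<dots> = norm (rk - z)" using distG[OF aG] by simp
            finally show "\<bar>f a - norm (a z - x0)\<bar> < \<delta>" using rkz by simp
          qed
          have zM: "\<And>a. a \<in> G \<Longrightarrow> norm (a z - x0) \<in> M"
          proof -
            fix a assume aG: "a \<in> G"
            have "a z = (a \<circ> inv u) x0" unfolding z_def by simp
            moreover have "a \<circ> inv u \<in> G" using aG invG uG compG by blast
            ultimately show "norm (a z - x0) \<in> M" using inM by metis
          qed
          have fmc: "first_min f (cl (Suc k)) = c"
          proof (rule fm_strict[OF dc(3)], intro ballI impI)
            fix a assume a: "a \<in> set (cl (Suc k))" "a \<noteq> c"
            have aGs: "a \<in> Gs (Suc k)" using clG a le by blast
            have aG: "a \<in> G" using GsG' aGs le by blast
            define h where "h = a \<circ> inv c"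
            have hGs: "h \<in> Gs (Suc k)" unfolding h_def using compGs invGs aGs cGs le by blast
            have "h \<noteq> id"
            proof
              assume "h = id"
              hence hh: "a \<circ> inv c = id" unfolding h_def .
              have "a = a \<circ> (inv c \<circ> c)" using invo1[OF cG] by simp
              also have "\<dots> = (a \<circ> inv c) \<circ> c" by (simp only: o_assoc)
              also have "\<dots> = c" using hh by simp
              finally show False using a(2) by simp
            qed
            hence "norm (inv d x0 - x0) < norm (h (inv d x0) - x0)" using Pall[OF le dc(2)] hGs
              unfolding P_def by blast
            hence lt: "norm (c z - x0) < norm (a z - x0)" unfolding h_def using cz zy y_def by simp
            have "2 * \<delta> \<le> norm (a z - x0) - norm (c z - x0)"
              using gap[OF zM[OF cG] zM[OF aG] lt] .
            thus "f c < f a" using approx[OF aG] approx[OF cG] by linarith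
          qed
          have DS: "D r (Suc k) = c \<circ> D r k" using fmc unfolding f_def rk_def by (simp only: dec_snd_Suc)
          have "g = d \<circ> D r (Suc k)" using u(2) dc(1) DS by (simp add: o_assoc)
          moreover have "norm (D r (Suc k) r - inv d x0) < \<delta>"
          proof -
            have "D r (Suc k) r = c rk" using DS unfolding rk_def by simp
            hence "norm (D r (Suc k) r - inv d x0) = norm (c rk - c z)" using cz y_def by simp
            also have "\<dots> = norm (rk - z)" using distG[OF cG] .
            finally show ?thesis using rkz by simp
          qed
          ultimately show "\<exists>u\<in>U (Suc k). g = u \<circ> D r (Suc k) \<and> norm (D r (Suc k) r - inv u x0) < \<delta>"
            using dc(2) by blast
        qed
      qed
    qed
    then obtain u where "u \<in> U m" "g = u \<circ> D r m" by blast
    hence "g = D r m" using U_m by simp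
    moreover have "id \<in> stab G x0" unfolding stab_def using idG by simp
    ultimately show "subgroup_decode x0 cl m r \<in> (\<lambda>s. s \<circ> g) ` stab G x0"
      unfolding subgroup_decode_def by (metis comp_id id_comp image_eqI)
  qed
qed

end


context dsetup begin

lemma S_step:
  assumes dec: "decodes_correctly_with_noise G x0 cl m"
    and le: "Suc k \<le> m" and d: "d \<in> U (Suc k)" and c: "c \<in> set (cl (Suc k))" and cne: "c \<noteq> id"
  shows "norm (inv d x0 - x0) < norm (inv c (inv d x0) - x0)"
proof (rule ccontr)
  assume neg: "\<not> ?thesis"
  obtain \<delta> where dpos: "\<delta> > 0" and H: "\<forall>g\<in>G. \<forall>r. norm (r - inv g x0) < \<delta> \<longrightarrow>
        subgroup_decode x0 cl m r \<in> (\<lambda>s. s \<circ> g) ` stab G x0"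
    using dec unfolding decodes_correctly_with_noise_def by blast
  have st: "stab G x0 = {id}" using stabG idG by blast
  have dG: "d \<in> G" using U_G d le by blast
  have cGs: "c \<in> Gs (Suc k)" using clG c le by blast
  have cG: "c \<in> G" using GsG' cGs le by blast
  define g where "g = d \<circ> c"
  have gG: "g \<in> G" unfolding g_def using compG dG cG by blast
  define y where "y = inv d x0"
  define z where "z = inv c y"
  have zg: "inv g x0 = z" unfolding g_def z_def y_def inv_comp[OF dG cG] by simp
  have dcU: "d \<circ> c \<in> U k" using U_peel[OF le] d c by blast
  define w where "w = inv c x0"
  have cw: "c w = x0" unfolding w_def using invr[OF cG] .
  have Q: "\<And>r. norm (r - z) < \<delta> \<Longrightarrow> norm (r - w) \<le> norm (r - x0)"
  proof -
    fix r assume rz: "norm (r - z) < \<delta>"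
    have "subgroup_decode x0 cl m r \<in> (\<lambda>s. s \<circ> g) ` stab G x0" using H gG rz zg by simp
    hence Dm: "D r m = g" unfolding subgroup_decode_def st by simp
    obtain q where q: "q \<in> U k" "D r m = q \<circ> D r k" using D_split_U le by (meson Suc_leD)
    have "q \<circ> D r k = (d \<circ> c) \<circ> id" using q Dm g_def by simp
    hence Dk: "D r k = id" using decomp_uniq_U[of k q "d \<circ> c" "D r k" id] q dcU D_in idGs le by simp
    obtain q' where q': "q' \<in> U (Suc k)" "D r m = q' \<circ> D r (Suc k)" using D_split_U le by blast
    have "q' \<circ> D r (Suc k) = d \<circ> c" using q' Dm g_def by simp
    hence DSk: "D r (Suc k) = c"
      using decomp_uniq_U[of "Suc k" q' d "D r (Suc k)" c] q' d D_in cGs le by simp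
    have "D r (Suc k) = first_min (\<lambda>a. norm (a (D r k r) - x0)) (cl (Suc k)) \<circ> D r k"
      by (rule dec_snd_Suc)
    hence "first_min (\<lambda>a. norm (a r - x0)) (cl (Suc k)) = c" using DSk Dk by simp
    hence "norm (c r - x0) \<le> norm (id r - x0)" using fm_le[OF cl_id[OF le], of "\<lambda>a. norm (a r - x0)"] by simp
    moreover have "norm (c r - x0) = norm (r - w)" using distG[OF cG, of r w] cw by simp
    ultimately show "norm (r - w) \<le> norm (r - x0)" by simp
  qed
  have "norm (z - w) = norm (y - x0)" using distG[OF cG, of z w] cw invr[OF cG] z_def by simp
  hence eqd: "norm (z - w) = norm (z - x0)" using Q[of z] dpos neg y_def z_def by simp
  have xw: "x0 \<noteq> w"
  proof
    assume "x0 = w"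
    hence "inv c x0 = x0" unfolding w_def by simp
    hence "inv c = id" using fix_id invG cG by blast
    hence "c = id" using inv_inv_eq[OF bijG[OF cG]] by (metis inv_id)
    thus False using cne by simp
  qed
  define t where "t = \<delta> / (2 * norm (x0 - w))"
  have nxw: "norm (x0 - w) > 0" using xw by simp
  have tpos: "t > 0" unfolding t_def using dpos nxw by simp
  define r where "r = z + t *\<^sub>R (x0 - w)"
  have "norm (r - z) = t * norm (x0 - w)" unfolding r_def using tpos by simp
  also have "\<dots> = \<delta> / 2" unfolding t_def using nxw by simp
  finally have "norm (r - z) < \<delta>" using dpos by simp
  hence "norm (r - w) \<le> norm (r - x0)" by (rule Q)
  moreover have "norm (r - x0) < norm (r - w)" unfolding r_def
    by (rule geom) (use eqd xw tpos in auto)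
  ultimately show False by simp
qed

lemma nec:
  assumes dec: "decodes_correctly_with_noise G x0 cl m"
  shows "\<forall>u\<in>U k. k \<le> m \<longrightarrow> P k u"
proof (induction k)
  case 0 then show ?case unfolding P_def using G0 by simp
next
  case (Suc k)
  show ?case
  proof (intro ballI impI)
    fix u assume u: "u \<in> U (Suc k)" and le: "Suc k \<le> m"
    show "P (Suc k) u" unfolding P_def
    proof (intro ballI impI)
      fix h assume hGs: "h \<in> Gs (Suc k)" and hne: "h \<noteq> id"
      have uG: "u \<in> G" using U_G u le by blast
      have hG: "h \<in> G" using GsG' hGs le by blast
      have "inv h \<in> Gs (Suc k)" using invGs hGs le by blast
      hence "\<exists>!c. c \<in> set (cl (Suc k)) \<and> c \<in> left_coset (inv h) (Gs k)" using cl_uniq le by blast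
      then obtain c where c: "c \<in> set (cl (Suc k))" "c \<in> left_coset (inv h) (Gs k)" by blast
      then obtain w where w: "w \<in> Gs k" "c = inv h \<circ> w" unfolding left_coset_def by auto
      have cG: "c \<in> G" using clG c le GsG' by blast
      have wG: "w \<in> G" using GsG' w le by (meson Suc_leD)
      have "h \<circ> c = (h \<circ> inv h) \<circ> w" using w by (simp add: o_assoc)
      hence hc: "h \<circ> c = w" using invo2[OF hG] by simp
      have hw: "h = w \<circ> inv c"
      proof -
        have "h = h \<circ> (c \<circ> inv c)" using invo2[OF cG] by simp
        also have "\<dots> = (h \<circ> c) \<circ> inv c" by (simp only: o_assoc)
        finally show ?thesis using hc by simp
      qed
      define y where "y = inv u x0"
      define v where "v = inv c y"
      have ucU: "u \<circ> c \<in> U k" using U_peel[OF le] u c by blast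
      have vuc: "inv (u \<circ> c) x0 = v" unfolding v_def y_def inv_comp[OF uG cG] by simp
      have hy: "h y = w v" unfolding v_def hw by simp
      have IH: "\<forall>u\<in>U k. P k u" using Suc.IH le by simp
      show "norm (inv u x0 - x0) < norm (h (inv u x0) - x0)"
      proof (cases "c = id")
        case True
        hence "h = w" using hw by simp
        have "u \<in> U k" using ucU True by simp
        hence "P k u" using IH by blast
        thus ?thesis unfolding P_def using w(1) \<open>h = w\<close> hne by blast
      next
        case False
        have s: "norm (y - x0) < norm (v - x0)" using S_step[OF dec le u c(1) False] unfolding v_def y_def by simp
        show ?thesis
        proof (cases "w = id")
          case True thus ?thesis using s hy y_def by simp
        next
          case False
          have "P k (u \<circ> c)" using IH ucU by blast
          hence "norm (v - x0) < norm (w v - x0)" unfolding P_def vuc using w(1) False by blast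
          thus ?thesis using s hy y_def by simp
        qed
      qed
    qed
  qed
qed

end


theorem theoremA:
  fixes G :: "'n::finite vmap set" and x0 :: "complex^'n"
    and Gs :: "nat \<Rightarrow> 'n vmap set" and m :: nat and cl :: "nat \<Rightarrow> 'n vmap list"
  assumes "finite_unitary_group G"
    and "norm x0 = 1"
    and "full_orbit G x0"
    and "subgroup_chain Gs m G"
    and "\<forall>k. 1 \<le> k \<and> k \<le> m \<longrightarrow> coset_leaders (cl k) (Gs (k - 1)) (Gs k)"
  shows "decodes_correctly_with_noise G x0 cl m \<longleftrightarrow>
         (\<forall>k<m. \<forall>c\<in>induced_cl cl k (m - k). minimal_rep x0 (Gs k) c)"
proof -
  have fin: "finite G" and un: "\<And>g. g \<in> G \<Longrightarrow> unitary_map g" and sg: "subgroup_of G G"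
    using assms(1) unfolding finite_unitary_group_def by auto
  have inj: "inj_on (\<lambda>g. g x0) G"
    using assms(3) fin unfolding full_orbit_def by (simp add: eq_card_imp_inj_on)
  interpret dsetup G x0 Gs m cl
    using fin un sg inj assms(4) assms(5) by unfold_locales auto
  show ?thesis
  proof
    assume dec: "decodes_correctly_with_noise G x0 cl m"
    show "\<forall>k<m. \<forall>c\<in>induced_cl cl k (m - k). minimal_rep x0 (Gs k) c"
    proof (intro allI impI ballI)
      fix k c assume k: "k < m" and c: "c \<in> induced_cl cl k (m - k)"
      hence cU: "c \<in> U k" unfolding U_def by simp
      hence "P k c" using nec[OF dec, of k] k by simp
      thus "minimal_rep x0 (Gs k) c" using minimal_iff[of k c] U_G[of k c] cU k by simp
    qed
  next
    assume R: "\<forall>k<m. \<forall>c\<in>induced_cl cl k (m - k). minimal_rep x0 (Gs k) c"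
    show "decodes_correctly_with_noise G x0 cl m"
    proof (rule suff)
      fix k u assume k: "k \<le> m" and u: "u \<in> U k"
      show "P k u"
      proof (cases "k = m")
        case True thus ?thesis using P_m u by simp
      next
        case False
        hence "minimal_rep x0 (Gs k) u" using R k u unfolding U_def by simp
        thus ?thesis using minimal_iff[of k u] U_G[of k u] u k by simp
      qed
    qed
  qed
qed

end
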